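(* Let $n,m,p,N\in\mathbb{N}_+$, $B\in\mathbb{R}^{n\times m}$, $C\in\mathbb{R}^{p\times n}$ of full column rank, $x_0\in\mathbb{R}^n$, $r_1,\dots,r_N\in\mathbb{R}^p$, $r_0:=Cx_0$, and $\mathcal{S}_{\rm M1}\subseteq\mathbb{R}^{n\times n}\times\mathbb{R}^{m\times N}$. Problem (MOPUL1) is: minimize $\sum_{t=1}^N\|y_t-r_t\|_2$ over $(A,U)\in\mathcal{S}_{\rm M1}$, $U=(u_0,\dots,u_{N-1})$, where $x_t=Ax_{t-1}+Bu_{t-1}$ ($t=1,\dots,N$) and $y_t=Cx_t$; let $v^*_{\rm M1}$ be its optimal value. Problem (AMOPUL1) is: minimize $\sum_{t=1}^N\|CAC^{\dagger}r_{t-1}+CBu_{t-1}-r_t\|_2$ over $(A,U)\in\mathcal{S}_{\rm M1}$; let $v^*_{\rm A1}$ be its optimal value and $\mathcal{F}^*_{\rm A1}$ its optimal solution set. If (AMOPUL1) is attainable (i.e., $\mathcal{F}^*_{\rm A1}\ne\emptyset$), then $$v^*_{\rm M1}\le\Big(\sum_{i=0}^{N-1}(\zeta^* )^i\Big)v^*_{\rm A1},\qquad \zeta^*:=\inf_{(A^{\rm a*},U^{\rm a*})\in\mathcal{F}^*_{\rm A1}}\|CA^{\rm a*}C^{\dagger}\|_2.$$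
   Context: $C^{\dagger}$ is the Moore–Penrose inverse of $C$; $\|\cdot\|_2$ is the Euclidean norm for vectors and the spectral norm for matrices. In the paper $\mathcal{S}_{\rm M1}$ is assumed SD representable, though this is not used in the claim. *)

theory Defs
  imports "HOL-Analysis.Analysis"
begin

definition pinv :: "real^'n^'m \<Rightarrow> real^'m^'n" where
  "pinv M = (THE X. M ** X ** M = M \<and> X ** M ** X = X \<and>
                    transpose (M ** X) = M ** X \<and> transpose (X ** M) = X ** M)"

definition spec_norm :: "real^'n^'m \<Rightarrow> real" where
  "spec_norm M = onorm (\<lambda>x. M *v x)"

primrec traj :: "real^'n^'n \<Rightarrow> real^'m^'n \<Rightarrow> real^'n \<Rightarrow> (nat \<Rightarrow> real^'m) \<Rightarrow> nat \<Rightarrow> real^'n" where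
  "traj A B x0 U 0 = x0"
| "traj A B x0 U (Suc t) = A *v traj A B x0 U t + B *v U t"

definition obj_M1 :: "real^'m^'n \<Rightarrow> real^'n^'p \<Rightarrow> real^'n \<Rightarrow> (nat \<Rightarrow> real^'p) \<Rightarrow> nat
    \<Rightarrow> ((real^'n^'n) \<times> (nat \<Rightarrow> real^'m)) \<Rightarrow> real" where
  "obj_M1 B C x0 r N z = (\<Sum>t=1..N. norm (C *v traj (fst z) B x0 (snd z) t - r t))"

definition ref0 :: "real^'n^'p \<Rightarrow> real^'n \<Rightarrow> (nat \<Rightarrow> real^'p) \<Rightarrow> nat \<Rightarrow> real^'p" where
  "ref0 C x0 r t = (if t = 0 then C *v x0 else r t)"

definition obj_A1 :: "real^'m^'n \<Rightarrow> real^'n^'p \<Rightarrow> real^'n \<Rightarrow> (nat \<Rightarrow> real^'p) \<Rightarrow> nat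
    \<Rightarrow> ((real^'n^'n) \<times> (nat \<Rightarrow> real^'m)) \<Rightarrow> real" where
  "obj_A1 B C x0 r N z = (\<Sum>t=1..N.
      norm ((C ** fst z ** pinv C) *v ref0 C x0 r (t - 1) + (C ** B) *v snd z (t - 1) - r t))"

definition argmin_set :: "('a \<Rightarrow> real) \<Rightarrow> 'a set \<Rightarrow> 'a set" where
  "argmin_set f S = {z \<in> S. \<forall>w \<in> S. f z \<le> f w}"

end

theory Submission imports Defs begin

lemma inj_cancel:
  fixes C :: "real^'n^'p" and Y Z :: "real^'k^'n"
  assumes "inj ((*v) C)" "C ** Y = C ** Z" shows "Y = Z"
proof -
  have "\<And>x. Y *v x = Z *v x"
  proof -
    fix x
    have "C *v (Y *v x) = C *v (Z *v x)" using assms(2) by (simp add: matrix_vector_mul_assoc)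
    then show "Y *v x = Z *v x" using assms(1) by (meson injD)
  qed
  then show ?thesis by (simp add: matrix_eq)
qed

lemma transpose_inner: "inner (x::real^'n) (transpose C *v y) = inner (C *v x) y"
  by (metis dot_lmul_matrix inner_commute transpose_transpose vector_transpose_matrix)

lemma pinv_left:
  fixes C :: "real^'n^'p"
  assumes "rank C = CARD('n)"
  shows "pinv C ** C = mat 1"
proof -
  have inj: "inj ((*v) C)" using assms full_rank_injective by blast
  define P where "P X \<longleftrightarrow> C ** X ** C = C \<and> X ** C ** X = X \<and>
                    transpose (C ** X) = C ** X \<and> transpose (X ** C) = X ** C" for X
  have left: "X ** C = mat 1" if "C ** X ** C = C" for X
    using inj_cancel[OF inj, of "X ** C" "mat 1"] that by (simp add: matrix_mul_assoc)
  define G where "G = transpose C ** C"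
  have injG: "inj ((*v) G)"
  proof (rule injI)
    fix x y assume "G *v x = G *v y"
    then have "G *v (x - y) = 0" by (simp add: matrix_vector_mult_diff_distrib)
    then have "inner (x - y) (transpose C *v (C *v (x - y))) = 0"
      by (simp add: G_def matrix_vector_mul_assoc)
    then have "inner (C *v (x - y)) (C *v (x - y)) = 0" by (simp only: transpose_inner)
    then have "C *v (x - y) = 0" by simp
    then have "C *v x = C *v y" by (simp add: matrix_vector_mult_diff_distrib)
    then show "x = y" using inj by (meson injD)
  qed
  obtain G' where G': "G' ** G = mat 1" using injG matrix_left_invertible_injective by blast
  then have G'r: "G ** G' = mat 1" using matrix_left_right_inverse by blast
  have Gs: "transpose G = G" by (simp add: G_def matrix_transpose_mul)
  have "transpose G' ** G = mat 1"
    by (metis Gs G'r matrix_transpose_mul transpose_mat)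
  then have G's: "transpose G' = G'"
    by (metis G'r matrix_mul_assoc matrix_mul_lid matrix_mul_rid)
  define X0 where "X0 = G' ** transpose C"
  have X0C: "X0 ** C = mat 1" using G' by (simp add: X0_def G_def matrix_mul_assoc)
  have "P X0"
    unfolding P_def
  proof (intro conjI)
    show "C ** X0 ** C = C" by (metis X0C matrix_mul_assoc matrix_mul_rid)
    show "X0 ** C ** X0 = X0" by (simp add: X0C)
    show "transpose (C ** X0) = C ** X0"
      by (simp add: X0_def matrix_transpose_mul G's matrix_mul_assoc)
    show "transpose (X0 ** C) = X0 ** C" by (simp add: X0C)
  qed
  moreover have "X = X0" if "P X" for X
  proof -
    have XC: "X ** C = mat 1" using that left P_def by blast
    have X0C': "X0 ** C = mat 1" by (fact X0C)
    have sX: "transpose (C ** X) = C ** X" using that P_def by blast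
    have sX0: "transpose (C ** X0) = C ** X0" using \<open>P X0\<close> P_def by blast
    have "C ** X = transpose (C ** X0 ** C ** X)"
      by (metis X0C matrix_mul_assoc matrix_mul_rid sX)
    also have "\<dots> = transpose (C ** X) ** transpose (C ** X0)"
      by (metis matrix_transpose_mul matrix_mul_assoc)
    also have "\<dots> = C ** X ** C ** X0" using sX sX0 by (simp add: matrix_mul_assoc)
    also have "\<dots> = C ** X0" by (metis XC matrix_mul_assoc matrix_mul_rid)
    finally have "C ** X = C ** X0" .
    then have "X ** C ** X = X ** C ** X0" by (metis matrix_mul_assoc)
    then show ?thesis using XC X0C by simp
  qed
  ultimately have "\<exists>!X. P X" by blast
  then have "P (pinv C)" unfolding pinv_def P_def[symmetric] by (rule theI')
  then show ?thesis using left P_def by blast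
qed

lemma sum_shift1: "(\<Sum>t=1..M. f t) = (\<Sum>t<M. f (Suc t))"
  by (induction M) auto

lemma sum_bound:
  fixes n a :: "nat \<Rightarrow> real" and z :: real
  assumes n0: "n 0 = 0" and rec: "\<And>t. n (Suc t) \<le> a (Suc t) + z * n t"
    and z: "z \<ge> 0" and apos: "\<And>t. a t \<ge> 0" and npos: "\<And>t. n t \<ge> 0"
  shows "(\<Sum>t=1..N. n t) \<le> (\<Sum>i<N. z^i) * (\<Sum>t=1..N. a t)"
proof (induction N)
  case 0
  then show ?case by simp
next
  case (Suc N)
  have "(\<Sum>t=1..Suc N. n t) = (\<Sum>t<Suc N. n (Suc t))" by (rule sum_shift1)
  also have "\<dots> \<le> (\<Sum>t<Suc N. a (Suc t) + z * n t)" by (rule sum_mono) (rule rec)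
  also have "\<dots> = (\<Sum>t=1..Suc N. a t) + z * (\<Sum>t<Suc N. n t)"
    by (simp only: sum.distrib sum_distrib_left sum_shift1)
  also have "(\<Sum>t<Suc N. n t) = (\<Sum>t=1..N. n t)"
    by (simp only: sum.lessThan_Suc_shift n0 sum_shift1 add_0_left)
  also have "z * (\<Sum>t=1..N. n t) \<le> z * ((\<Sum>i<N. z^i) * (\<Sum>t=1..N. a t))"
    using Suc.IH z by (rule mult_left_mono)
  also have "\<dots> \<le> z * ((\<Sum>i<N. z^i) * (\<Sum>t=1..Suc N. a t))"
    using z apos by (intro mult_left_mono sum_nonneg) (auto intro!: sum_nonneg)
  finally have "(\<Sum>t=1..Suc N. n t) \<le> (1 + z * (\<Sum>i<N. z^i)) * (\<Sum>t=1..Suc N. a t)"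
    by (simp add: algebra_simps)
  also have "1 + z * (\<Sum>i<N. z^i) = (\<Sum>i<Suc N. z^i)"
    by (simp only: sum.lessThan_Suc_shift sum_distrib_left power_Suc power_0)
  finally show ?case .
qed

lemma key:
  fixes B :: "real^'m^'n" and C :: "real^'n^'p" and x0 :: "real^'n"
    and r :: "nat \<Rightarrow> real^'p" and A :: "real^'n^'n" and U :: "nat \<Rightarrow> real^'m"
  assumes rk: "rank C = CARD('n)"
  shows "obj_M1 B C x0 r N (A, U)
     \<le> (\<Sum>i<N. (spec_norm (C ** A ** pinv C)) ^ i) * obj_A1 B C x0 r N (A, U)"
proof -
  define M where "M = C ** A ** pinv C"
  define x where "x = traj A B x0 U"
  define e where "e t = C *v x t - ref0 C x0 r t" for t
  define a where "a t = M *v ref0 C x0 r (t - 1) + (C ** B) *v U (t - 1) - r t" for t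
  have PC: "pinv C ** C = mat 1" using rk by (rule pinv_left)
  have bl: "bounded_linear (\<lambda>v. M *v v)" by simp
  have z: "spec_norm M \<ge> 0" unfolding spec_norm_def by (rule onorm_pos_le[OF bl])
  have rec: "e (Suc t) = a (Suc t) + M *v e t" for t
  proof -
    have MC: "M *v (C *v x t) = C *v (A *v x t)"
    proof -
      have "M *v (C *v x t) = C *v (A *v ((pinv C ** C) *v x t))"
        by (simp only: M_def matrix_vector_mul_assoc matrix_mul_assoc)
      also have "\<dots> = C *v (A *v x t)" by (simp only: PC matrix_vector_mul_lid)
      finally show ?thesis .
    qed
    have xS: "C *v x (Suc t) = C *v (A *v x t) + (C ** B) *v U t"
      by (simp add: x_def matrix_vector_right_distrib matrix_vector_mul_assoc)
    have eS: "e (Suc t) = C *v (A *v x t) + (C ** B) *v U t - r (Suc t)"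
      by (simp add: e_def ref0_def xS)
    have aS: "a (Suc t) = M *v ref0 C x0 r t + (C ** B) *v U t - r (Suc t)"
      by (simp add: a_def)
    have Me: "M *v e t = M *v (C *v x t) - M *v ref0 C x0 r t"
      by (simp add: e_def matrix_vector_mult_diff_distrib)
    show ?thesis unfolding eS aS Me MC by (simp add: algebra_simps)
  qed
  have nrec: "norm (e (Suc t)) \<le> norm (a (Suc t)) + spec_norm M * norm (e t)" for t
  proof -
    have "norm (M *v e t) \<le> spec_norm M * norm (e t)"
      unfolding spec_norm_def by (rule onorm[OF bl])
    moreover have "norm (e (Suc t)) \<le> norm (a (Suc t)) + norm (M *v e t)"
      unfolding rec by (rule norm_triangle_ineq)
    ultimately show ?thesis by linarith
  qed
  have e0: "norm (e 0) = 0" by (simp add: e_def x_def ref0_def)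
  have "(\<Sum>t=1..N. norm (e t)) \<le> (\<Sum>i<N. (spec_norm M)^i) * (\<Sum>t=1..N. norm (a t))"
    by (rule sum_bound[OF e0 nrec z]) auto
  moreover have "obj_M1 B C x0 r N (A, U) = (\<Sum>t=1..N. norm (e t))"
    unfolding obj_M1_def e_def x_def by (intro sum.cong) (auto simp: ref0_def)
  moreover have "obj_A1 B C x0 r N (A, U) = (\<Sum>t=1..N. norm (a t))"
    unfolding obj_A1_def a_def M_def by simp
  ultimately show ?thesis by (simp add: M_def)
qed


theorem theorem6:
  fixes B :: "real^'m^'n" and C :: "real^'n^'p" and x0 :: "real^'n"
    and r :: "nat \<Rightarrow> real^'p" and N :: nat
    and S :: "((real^'n^'n) \<times> (nat \<Rightarrow> real^'m)) set"
  assumes "N \<ge> 1"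
    and "rank C = CARD('n)"
    and "argmin_set (obj_A1 B C x0 r N) S \<noteq> {}"
  shows "Inf (obj_M1 B C x0 r N ` S)
     \<le> (\<Sum>i<N. (Inf ((\<lambda>z. spec_norm (C ** fst z ** pinv C)) ` argmin_set (obj_A1 B C x0 r N) S)) ^ i)
        * Inf (obj_A1 B C x0 r N ` S)"
proof -
  define F where "F = argmin_set (obj_A1 B C x0 r N) S"
  define zf where "zf z = spec_norm (C ** fst z ** pinv C)" for z :: "(real^'n^'n) \<times> (nat \<Rightarrow> real^'m)"
  define v where "v = Inf (obj_A1 B C x0 r N ` S)"
  define L where "L = Inf (obj_M1 B C x0 r N ` S)"
  define g where "g y = (\<Sum>i<N. y ^ i) * v" for y :: real
  define zs where "zs = Inf (zf ` F)"
  have FS: "F \<subseteq> S" by (auto simp: F_def argmin_set_def)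
  have Fne: "F \<noteq> {}" using assms(3) by (simp add: F_def)
  have vz: "v = obj_A1 B C x0 r N z" if "z \<in> F" for z
    unfolding v_def using that
    by (intro cInf_eq_minimum) (auto simp: F_def argmin_set_def)
  have M1nn: "obj_M1 B C x0 r N z \<ge> 0" for z
    unfolding obj_M1_def by (auto intro: sum_nonneg)
  have A1nn: "obj_A1 B C x0 r N z \<ge> 0" for z
    unfolding obj_A1_def by (auto intro: sum_nonneg)
  have zfnn: "zf z \<ge> 0" for z
    unfolding zf_def spec_norm_def by (rule onorm_pos_le) simp
  obtain z0 where z0: "z0 \<in> F" using Fne by blast
  have vnn: "v \<ge> 0" using vz[OF z0] A1nn by simp
  have Lg: "L \<le> g (zf z)" if "z \<in> F" for z
  proof -
    obtain A U where zAU: "z = (A, U)" by (cases z)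
    have "L \<le> obj_M1 B C x0 r N z"
      unfolding L_def using that FS M1nn
      by (intro cInf_lower) (auto intro: bdd_belowI[where m=0])
    also have "\<dots> \<le> g (zf z)"
      using key[OF assms(2), of B x0 r N A U] vz[OF that]
      by (simp add: zAU g_def zf_def)
    finally show ?thesis .
  qed
  have bddz: "bdd_below (zf ` F)" using zfnn by (auto intro: bdd_belowI[where m=0])
  have "\<exists>z. z \<in> F \<and> zf z < zs + 1 / Suc k" for k
  proof -
    have "Inf (zf ` F) < zs + 1 / Suc k" by (simp add: zs_def)
    then obtain y where "y \<in> zf ` F" "y < zs + 1 / Suc k"
      using cInf_lessD[of "zf ` F"] Fne by blast
    then show ?thesis by blast
  qed
  then obtain zk where zk: "\<And>k. zk k \<in> F" "\<And>k. zf (zk k) < zs + 1 / Suc k" by metis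
  have lowk: "zs \<le> zf (zk k)" for k
    unfolding zs_def using bddz zk(1) by (intro cInf_lower) auto
  have "(\<lambda>k. zf (zk k)) \<longlonglongrightarrow> zs"
  proof (rule tendsto_sandwich[where f="\<lambda>_. zs" and h="\<lambda>k. zs + 1 / Suc k"])
    show "\<forall>\<^sub>F k in sequentially. zs \<le> zf (zk k)" using lowk by simp
    show "\<forall>\<^sub>F k in sequentially. zf (zk k) \<le> zs + 1 / Suc k" using zk(2) by (simp add: less_imp_le)
    show "(\<lambda>k. zs) \<longlonglongrightarrow> zs" by simp
    have "(\<lambda>k. 1 / real (Suc k)) \<longlonglongrightarrow> 0" by (rule LIMSEQ_Suc[OF lim_const_over_n])
    then show "(\<lambda>k. zs + 1 / real (Suc k)) \<longlonglongrightarrow> zs"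
      using tendsto_add[of "\<lambda>_. zs" zs sequentially] by fastforce
  qed
  then have "(\<lambda>k. g (zf (zk k))) \<longlonglongrightarrow> g zs"
    unfolding g_def by (intro tendsto_intros)
  then have "L \<le> g zs"
    by (rule tendsto_lowerbound) (use Lg zk(1) in auto)
  then show ?thesis by (simp add: L_def g_def zs_def zf_def F_def v_def)
qed

end
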